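(* Let $G$ be a finite group of nilpotency class at most $2$. Let $e=\exp(G)$, $e'=\exp([G,G])$ and $f=\exp(G/Z(G))$. Then $$W:=\{x^m[x,y^n]\in F_2:\ m\mid e,\ n\mid f,\ n\le e'\}$$ is a $2$-exhaustive set for word images on $G$; that is, for every $v\in F_2$ there exists $w\in W$ with $v(G)=w(G)$.
   Context: $[a,b]=aba^{-1}b^{-1}$; $x,y$ are the free generators of $F_2$; for $w\in F_2$, $w(G)=\{w(a,b):a,b\in G\}$. Nilpotency class at most 2 means $[G,G]\subseteq Z(G)$. A subset $W\subseteq F_d$ is a $d$-exhaustive set for word images on $G$ if for every $v\in F_d$ there is $w\in W$ with $v(G)=w(G)$. *)

theory Defs
  imports "HOL-Algebra.Algebra"
begin

definition grp_center :: "('a, 'b) monoid_scheme \<Rightarrow> 'a set" where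
  "grp_center G = {z \<in> carrier G. \<forall>g \<in> carrier G. z \<otimes>\<^bsub>G\<^esub> g = g \<otimes>\<^bsub>G\<^esub> z}"

definition grp_exp :: "('a, 'b) monoid_scheme \<Rightarrow> nat" where
  "grp_exp G = (LEAST n. 0 < n \<and> (\<forall>g \<in> carrier G. g [^]\<^bsub>G\<^esub> n = \<one>\<^bsub>G\<^esub>))"

text \<open>Words in the free group F_2 on generators x, y, represented as lists of
  letters (gen, inv): gen = False is x, gen = True is y; inv = True means the
  inverse letter. Every element of F_2 is represented by such a list, and the
  word map only depends on the represented element.\<close>
type_synonym word2 = "(bool \<times> bool) list"

definition letter_eval :: "('a, 'b) monoid_scheme \<Rightarrow> 'a \<Rightarrow> 'a \<Rightarrow> bool \<times> bool \<Rightarrow> 'a" where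
  "letter_eval G a b l =
     (let g = (if fst l then b else a) in if snd l then inv\<^bsub>G\<^esub> g else g)"

definition word_eval :: "('a, 'b) monoid_scheme \<Rightarrow> word2 \<Rightarrow> 'a \<Rightarrow> 'a \<Rightarrow> 'a" where
  "word_eval G w a b = foldr (\<lambda>l acc. letter_eval G a b l \<otimes>\<^bsub>G\<^esub> acc) w \<one>\<^bsub>G\<^esub>"

definition word_image :: "('a, 'b) monoid_scheme \<Rightarrow> word2 \<Rightarrow> 'a set" where
  "word_image G w = {word_eval G w a b | a b. a \<in> carrier G \<and> b \<in> carrier G}"

definition wx :: word2 where "wx = [(False, False)]"
definition wy :: word2 where "wy = [(True, False)]"
definition winv :: "word2 \<Rightarrow> word2" where
  "winv w = rev (map (\<lambda>(g, i). (g, \<not> i)) w)"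
definition wpow :: "word2 \<Rightarrow> nat \<Rightarrow> word2" where
  "wpow w n = concat (replicate n w)"
definition wcomm :: "word2 \<Rightarrow> word2 \<Rightarrow> word2" where
  "wcomm u v = u @ v @ winv u @ winv v"

definition exhaustive2 :: "('a, 'b) monoid_scheme \<Rightarrow> word2 set \<Rightarrow> bool" where
  "exhaustive2 G W \<longleftrightarrow> (\<forall>v. \<exists>w \<in> W. word_image G v = word_image G w)"

end

theory Submission
  imports Defs "HOL-Computational_Algebra.Primes"
begin


definition cm :: "('a, 'b) monoid_scheme \<Rightarrow> 'a \<Rightarrow> 'a \<Rightarrow> 'a" where
  "cm G x y = x \<otimes>\<^bsub>G\<^esub> y \<otimes>\<^bsub>G\<^esub> inv\<^bsub>G\<^esub> x \<otimes>\<^bsub>G\<^esub> inv\<^bsub>G\<^esub> y"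

locale cl2 = group G for G (structure) +
  assumes cl2: "derived G (carrier G) \<subseteq> grp_center G"
begin

abbreviation "Z \<equiv> grp_center G"

lemma cm_closed[simp]: "x \<in> carrier G \<Longrightarrow> y \<in> carrier G \<Longrightarrow> cm G x y \<in> carrier G"
  by (simp add: cm_def)

lemma cm_Z: "x \<in> carrier G \<Longrightarrow> y \<in> carrier G \<Longrightarrow> cm G x y \<in> Z"
proof -
  assume "x \<in> carrier G" "y \<in> carrier G"
  hence "cm G x y \<in> derived_set G (carrier G)" unfolding cm_def by blast
  hence "cm G x y \<in> derived G (carrier G)" unfolding derived_def by (rule generate.incl)
  thus ?thesis using cl2 by blast
qed

lemma Z_comm: "z \<in> Z \<Longrightarrow> x \<in> carrier G \<Longrightarrow> z \<otimes> x = x \<otimes> z"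
  by (simp add: grp_center_def)

lemma Z_carr: "z \<in> Z \<Longrightarrow> z \<in> carrier G"
  by (simp add: grp_center_def)

lemma commute_int_pow:
  assumes "z \<in> carrier G" "x \<in> carrier G" "z \<otimes> x = x \<otimes> z"
  shows "z [^] (k::int) \<otimes> x = x \<otimes> z [^] k"
proof -
  have n: "z [^] (n::nat) \<otimes> x = x \<otimes> z [^] n" for n
    by (rule group_commutes_pow[OF assms(3,1,2)])
  have i: "inv a \<otimes> x = x \<otimes> inv a" if "a \<in> carrier G" "a \<otimes> x = x \<otimes> a" for a
  proof -
    have "inv a \<otimes> x = inv a \<otimes> (x \<otimes> a) \<otimes> inv a" using that(1) assms(2) by (simp add: m_assoc)
    also have "\<dots> = inv a \<otimes> (a \<otimes> x) \<otimes> inv a" by (subst that(2)) (rule refl)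
    also have "\<dots> = x \<otimes> inv a" using that(1) assms(2) by (simp add: m_assoc[symmetric])
    finally show ?thesis .
  qed
  show ?thesis
  proof (cases "k < 0")
    case True
    hence "z [^] k = inv (z [^] nat (-k))" unfolding int_pow_def2[of G z k] by simp
    moreover have "inv (z [^] nat (-k)) \<otimes> x = x \<otimes> inv (z [^] nat (-k))"
      by (rule i) (simp_all add: assms(1) n)
    ultimately show ?thesis by simp
  next
    case False
    hence "z [^] k = z [^] nat k" unfolding int_pow_def2[of G z k] by simp
    thus ?thesis using n[of "nat k"] by (simp only:)
  qed
qed

lemma Z_pow: "z \<in> Z \<Longrightarrow> z [^] (k::int) \<in> Z"
proof -
  assume z: "z \<in> Z"
  have "z [^] k \<otimes> g = g \<otimes> z [^] k" if "g \<in> carrier G" for g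
    using commute_int_pow[OF Z_carr[OF z] that Z_comm[OF z that]] .
  thus ?thesis using Z_carr[OF z] unfolding grp_center_def by blast
qed

lemma Z_mult: "z \<in> Z \<Longrightarrow> w \<in> Z \<Longrightarrow> z \<otimes> w \<in> Z"
proof -
  assume z: "z \<in> Z" and w: "w \<in> Z"
  have "z \<otimes> w \<otimes> g = g \<otimes> (z \<otimes> w)" if g: "g \<in> carrier G" for g
  proof -
    have "z \<otimes> w \<otimes> g = z \<otimes> (g \<otimes> w)" using z w g Z_comm[OF w g] Z_carr by (simp add: m_assoc)
    also have "\<dots> = g \<otimes> (z \<otimes> w)" using z w g Z_comm[OF z g] Z_carr by (simp add: m_assoc[symmetric])
    finally show ?thesis .
  qed
  thus ?thesis using Z_carr[OF z] Z_carr[OF w] unfolding grp_center_def by blast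
qed

lemma cm_left: assumes "x \<in> carrier G" "x' \<in> carrier G" "y \<in> carrier G"
  shows "cm G (x \<otimes> x') y = cm G x y \<otimes> cm G x' y"
proof -
  have e: "x' \<otimes> y \<otimes> inv x' = cm G x' y \<otimes> y"
    using assms by (simp add: cm_def m_assoc)
  have "cm G (x \<otimes> x') y = x \<otimes> (x' \<otimes> y \<otimes> inv x') \<otimes> inv x \<otimes> inv y"
    using assms by (simp add: cm_def m_assoc inv_mult_group)
  also have "\<dots> = x \<otimes> (cm G x' y \<otimes> y) \<otimes> inv x \<otimes> inv y" by (simp add: e)
  also have "\<dots> = (x \<otimes> cm G x' y) \<otimes> y \<otimes> inv x \<otimes> inv y"
    using assms by (simp add: m_assoc)
  also have "\<dots> = (cm G x' y \<otimes> x) \<otimes> y \<otimes> inv x \<otimes> inv y"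
    using Z_comm[OF cm_Z[OF assms(2,3)] assms(1)] by simp
  also have "\<dots> = cm G x' y \<otimes> cm G x y"
    using assms by (simp add: m_assoc cm_def)
  also have "\<dots> = cm G x y \<otimes> cm G x' y"
    using Z_comm[OF cm_Z[OF assms(2,3)], of "cm G x y"] assms by simp
  finally show ?thesis .
qed

lemma cm_swap: "x \<in> carrier G \<Longrightarrow> y \<in> carrier G \<Longrightarrow> cm G y x = inv (cm G x y)"
  by (simp add: cm_def inv_mult_group m_assoc)

lemma cm_pow_left: assumes "x \<in> carrier G" "y \<in> carrier G"
  shows "cm G (x [^] (k::int)) y = cm G x y [^] k"
proof -
  have "(\<lambda>x. cm G x y) \<in> hom G G" using assms by (auto intro!: homI simp: cm_left)
  thus ?thesis using hom_int_pow[of "\<lambda>x. cm G x y" G G x k] assms is_group by simp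
qed

lemma cm_pow_right: assumes "x \<in> carrier G" "y \<in> carrier G"
  shows "cm G x (y [^] (k::int)) = cm G x y [^] k"
proof -
  have "cm G x (y [^] k) = inv (cm G (y [^] k) x)" using assms cm_swap[of x "y [^] k"] by simp
  also have "\<dots> = inv (cm G y x [^] k)" using assms by (simp add: cm_pow_left)
  also have "\<dots> = (inv (cm G y x)) [^] k" using assms by (simp add: int_pow_inv)
  also have "\<dots> = cm G x y [^] k" using assms cm_swap[of y x] by simp
  finally show ?thesis .
qed

lemma cm_pow_pow: assumes "x \<in> carrier G" "y \<in> carrier G"
  shows "cm G (x [^] (a::int)) (y [^] (b::int)) = cm G x y [^] (a * b)"
proof -
  have "cm G (x [^] a) (y [^] b) = cm G x (y [^] b) [^] a" using assms cm_pow_left[of x "y [^] b" a] by simp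
  also have "\<dots> = (cm G x y [^] b) [^] a" using assms cm_pow_right[of x y b] by simp
  also have "\<dots> = cm G x y [^] (a * b)" using assms int_pow_pow[of "cm G x y" b a] by (simp add: mult.commute)
  finally show ?thesis .
qed

end



definition T :: "int \<Rightarrow> int" where "T k = k * (k - 1) div 2"

lemma T2: "2 * T k = k * (k - 1)"
proof -
  have "even (k * (k - 1))" by (cases "even k") auto
  thus ?thesis unfolding T_def by simp
qed

lemma T_0[simp]: "T 0 = 0" by (simp add: T_def)
lemma T_Suc: "T (k + 1) = T k + k"
  using T2[of k] T2[of "k+1"] by (simp add: algebra_simps)
lemma T_neg: "T (- k) = k * k - T k"
  using T2[of k] T2[of "-k"] by (simp add: algebra_simps)

type_synonym trip = "int \<times> int \<times> int"

fun hmul :: "trip \<Rightarrow> trip \<Rightarrow> trip" where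
  "hmul (a1, b1, c1) (a2, b2, c2) = (a1 + a2, b1 + b2, c1 + c2 - b1 * a2)"
fun hinv :: "trip \<Rightarrow> trip" where
  "hinv (a, b, c) = (-a, -b, -c - a * b)"
fun hpow :: "int \<Rightarrow> trip \<Rightarrow> trip" where
  "hpow k (a, b, c) = (k * a, k * b, k * c - a * b * T k)"
fun hsub :: "trip \<Rightarrow> trip \<Rightarrow> trip \<Rightarrow> trip" where
  "hsub (a, b, c) (a1, b1, c1) (a2, b2, c2) =
     (a * a1 + b * a2, a * b1 + b * b2,
      a * c1 + b * c2 - a1 * b1 * T a - a2 * b2 * T b - a * b * b1 * a2 + c * (a1 * b2 - b1 * a2))"

definition ev :: "('a, 'b) monoid_scheme \<Rightarrow> 'a \<Rightarrow> 'a \<Rightarrow> trip \<Rightarrow> 'a" where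
  "ev G g h t = (case t of (a, b, c) \<Rightarrow>
      cm G g h [^]\<^bsub>G\<^esub> c \<otimes>\<^bsub>G\<^esub> (g [^]\<^bsub>G\<^esub> a \<otimes>\<^bsub>G\<^esub> h [^]\<^bsub>G\<^esub> b))"

context cl2 begin

lemma ev_simp: "ev G g h (a, b, c) = cm G g h [^] c \<otimes> (g [^] a \<otimes> h [^] b)"
  by (simp add: ev_def)

lemma ev_closed[simp]: "g \<in> carrier G \<Longrightarrow> h \<in> carrier G \<Longrightarrow> ev G g h t \<in> carrier G"
  by (cases t) (simp add: ev_def)

lemma lcommZ: "z \<in> Z \<Longrightarrow> x \<in> carrier G \<Longrightarrow> y \<in> carrier G \<Longrightarrow> x \<otimes> (z \<otimes> y) = z \<otimes> (x \<otimes> y)"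
proof -
  assume z: "z \<in> Z" and x: "x \<in> carrier G" and y: "y \<in> carrier G"
  have "x \<otimes> (z \<otimes> y) = (x \<otimes> z) \<otimes> y" using z x y Z_carr by (simp add: m_assoc)
  also have "\<dots> = (z \<otimes> x) \<otimes> y" using Z_comm[OF z x] by simp
  also have "\<dots> = z \<otimes> (x \<otimes> y)" using z x y Z_carr by (simp add: m_assoc)
  finally show ?thesis .
qed

lemma cm_mult: assumes x: "x \<in> carrier G" and y: "y \<in> carrier G" shows "x \<otimes> y = cm G x y \<otimes> (y \<otimes> x)"
proof -
  have "cm G x y \<otimes> (y \<otimes> x) = x \<otimes> y \<otimes> inv x \<otimes> (inv y \<otimes> (y \<otimes> x))" using x y by (simp add: cm_def m_assoc)
  also have "inv y \<otimes> (y \<otimes> x) = x" using x y by (simp add: m_assoc[symmetric])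
  also have "x \<otimes> y \<otimes> inv x \<otimes> x = x \<otimes> y" using x y by (simp add: m_assoc)
  finally show ?thesis by simp
qed

lemma ev_mul:
  assumes g: "g \<in> carrier G" and h: "h \<in> carrier G"
  shows "ev G g h (a1, b1, c1) \<otimes> ev G g h (a2, b2, c2) = ev G g h (hmul (a1, b1, c1) (a2, b2, c2))"
proof -
  define C where "C = cm G g h"
  have CZ: "C \<in> Z" unfolding C_def using cm_Z g h .
  have C: "C \<in> carrier G" using Z_carr[OF CZ] .
  have CpZ: "C [^] (i::int) \<in> Z" for i using Z_pow[OF CZ] .
  have Cp: "C [^] (i::int) \<in> carrier G" for i using C by simp
  have gp: "g [^] (i::int) \<in> carrier G" for i using g by simp
  have hp: "h [^] (i::int) \<in> carrier G" for i using h by simp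
  have BA: "h [^] b1 \<otimes> g [^] a2 = C [^] (- (b1 * a2)) \<otimes> (g [^] a2 \<otimes> h [^] b1)"
  proof -
    have "cm G (h [^] b1) (g [^] a2) = cm G h g [^] (b1 * a2)" using cm_pow_pow g h by simp
    also have "\<dots> = (inv C) [^] (b1 * a2)" using cm_swap[OF g h] by (simp add: C_def)
    also have "\<dots> = C [^] (- (b1 * a2))" using C by (simp add: int_pow_inv int_pow_neg)
    finally have "cm G (h [^] b1) (g [^] a2) = C [^] (- (b1 * a2))" .
    thus ?thesis using cm_mult[OF hp gp] by simp
  qed
  have "ev G g h (a1, b1, c1) \<otimes> ev G g h (a2, b2, c2)
      = C [^] c1 \<otimes> (g [^] a1 \<otimes> h [^] b1) \<otimes> (C [^] c2 \<otimes> (g [^] a2 \<otimes> h [^] b2))"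
    by (simp add: ev_simp C_def)
  also have "\<dots> = C [^] c1 \<otimes> (C [^] c2 \<otimes> (g [^] a1 \<otimes> (h [^] b1 \<otimes> g [^] a2) \<otimes> h [^] b2))"
    using lcommZ[OF CpZ, of "g [^] a1 \<otimes> h [^] b1" "g [^] a2 \<otimes> h [^] b2" c2] Cp gp hp
    by (simp add: m_assoc)
  also have "\<dots> = C [^] c1 \<otimes> (C [^] c2 \<otimes> (g [^] a1 \<otimes> (C [^] (- (b1 * a2)) \<otimes> (g [^] a2 \<otimes> h [^] b1)) \<otimes> h [^] b2))"
    by (simp add: BA)
  also have "\<dots> = C [^] c1 \<otimes> (C [^] c2 \<otimes> (C [^] (- (b1 * a2)) \<otimes> (g [^] a1 \<otimes> g [^] a2 \<otimes> (h [^] b1 \<otimes> h [^] b2))))"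
    using lcommZ[OF CpZ, of "g [^] a1" "g [^] a2 \<otimes> h [^] b1" "- (b1 * a2)"] Cp gp hp
    by (simp add: m_assoc)
  also have "\<dots> = C [^] c1 \<otimes> C [^] c2 \<otimes> C [^] (- (b1 * a2)) \<otimes> (g [^] (a1 + a2) \<otimes> h [^] (b1 + b2))"
    using C g h by (simp add: int_pow_mult m_assoc)
  also have "\<dots> = C [^] (c1 + c2 - b1 * a2) \<otimes> (g [^] (a1 + a2) \<otimes> h [^] (b1 + b2))"
  proof -
    have "C [^] c1 \<otimes> C [^] c2 \<otimes> C [^] (- (b1 * a2)) = C [^] (c1 + c2 - b1 * a2)"
      using C by (simp add: int_pow_mult[symmetric])
    thus ?thesis by simp
  qed
  also have "\<dots> = ev G g h (hmul (a1, b1, c1) (a2, b2, c2))"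
    by (simp add: ev_simp C_def)
  finally show ?thesis .
qed


lemma ev_zero: "g \<in> carrier G \<Longrightarrow> h \<in> carrier G \<Longrightarrow> ev G g h (0, 0, 0) = \<one>"
  by (simp add: ev_simp)

lemma ev_x: "g \<in> carrier G \<Longrightarrow> h \<in> carrier G \<Longrightarrow> ev G g h (1, 0, 0) = g"
  by (simp add: ev_simp)

lemma ev_y: "g \<in> carrier G \<Longrightarrow> h \<in> carrier G \<Longrightarrow> ev G g h (0, 1, 0) = h"
  by (simp add: ev_simp)

lemma ev_mul': "g \<in> carrier G \<Longrightarrow> h \<in> carrier G \<Longrightarrow> ev G g h s \<otimes> ev G g h t = ev G g h (hmul s t)"
  using ev_mul by (cases s, cases t) auto

lemma ev_inv: assumes g: "g \<in> carrier G" and h: "h \<in> carrier G"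
  shows "inv (ev G g h s) = ev G g h (hinv s)"
proof -
  obtain a b c where s: "s = (a, b, c)" by (cases s)
  have "ev G g h (hinv s) \<otimes> ev G g h s = ev G g h (0, 0, 0)"
    using ev_mul'[OF g h, of "hinv s" s] s by (simp add: algebra_simps)
  thus ?thesis using g h ev_zero by (simp add: inv_equality)
qed

lemma ev_pow_nat: assumes g: "g \<in> carrier G" and h: "h \<in> carrier G"
  shows "ev G g h s [^] (n::nat) = ev G g h (hpow (int n) s)"
proof (induction n)
  case 0
  then show ?case using ev_zero[OF g h] by (cases s) simp
next
  case (Suc n)
  obtain a b c where s: "s = (a, b, c)" by (cases s)
  have "ev G g h s [^] Suc n = ev G g h (hpow (int n) s) \<otimes> ev G g h s" using Suc by simp
  also have "\<dots> = ev G g h (hmul (hpow (int n) s) s)" using ev_mul'[OF g h] by simp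
  also have "hmul (hpow (int n) s) s = hpow (int (Suc n)) s"
    using s T_Suc[of "int n"] by (simp add: algebra_simps)
  finally show ?case .
qed

lemma ev_pow: assumes g: "g \<in> carrier G" and h: "h \<in> carrier G"
  shows "ev G g h s [^] (k::int) = ev G g h (hpow k s)"
proof (cases "k < 0")
  case True
  obtain a b c where s: "s = (a, b, c)" by (cases s)
  have "ev G g h s [^] k = inv (ev G g h s [^] nat (- k))"
    unfolding int_pow_def2[of G _ k] using True by simp
  also have "\<dots> = ev G g h (hinv (hpow (int (nat (- k))) s))" using ev_pow_nat ev_inv g h by simp
  also have "hinv (hpow (int (nat (- k))) s) = hpow k s"
    using True s by (simp add: T_neg algebra_simps)
  finally show ?thesis .
next
  case False
  have "ev G g h s [^] k = ev G g h s [^] nat k"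
    unfolding int_pow_def2[of G _ k] using False by simp
  also have "\<dots> = ev G g h (hpow k s)" using ev_pow_nat[OF g h] False by simp
  finally show ?thesis .
qed

lemma ev_comm: assumes g: "g \<in> carrier G" and h: "h \<in> carrier G"
  shows "cm G (ev G g h (a1, b1, c1)) (ev G g h (a2, b2, c2)) = ev G g h (0, 0, a1 * b2 - b1 * a2)"
proof -
  have "cm G (ev G g h (a1, b1, c1)) (ev G g h (a2, b2, c2))
     = ev G g h (hmul (hmul (hmul (a1, b1, c1) (a2, b2, c2)) (hinv (a1, b1, c1))) (hinv (a2, b2, c2)))"
    unfolding cm_def using g h by (simp add: ev_inv[symmetric] ev_mul'[symmetric] del: hinv.simps hmul.simps)
  also have "hmul (hmul (hmul (a1, b1, c1) (a2, b2, c2)) (hinv (a1, b1, c1))) (hinv (a2, b2, c2))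
      = (0, 0, a1 * b2 - b1 * a2)" by (simp add: algebra_simps)
  finally show ?thesis .
qed

lemma ev_sub: assumes g: "g \<in> carrier G" and h: "h \<in> carrier G"
  shows "ev G (ev G g h s1) (ev G g h s2) t = ev G g h (hsub t s1 s2)"
proof -
  obtain a b c where t: "t = (a, b, c)" by (cases t)
  obtain a1 b1 c1 where s1: "s1 = (a1, b1, c1)" by (cases s1)
  obtain a2 b2 c2 where s2: "s2 = (a2, b2, c2)" by (cases s2)
  have "ev G (ev G g h s1) (ev G g h s2) t
     = cm G (ev G g h s1) (ev G g h s2) [^] c \<otimes> (ev G g h s1 [^] a \<otimes> ev G g h s2 [^] b)"
    unfolding t by (rule ev_simp)
  also have "\<dots> = ev G g h (0, 0, a1 * b2 - b1 * a2) [^] c \<otimes> (ev G g h s1 [^] a \<otimes> ev G g h s2 [^] b)"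
    using ev_comm[OF g h, of a1 b1 c1 a2 b2 c2] s1 s2 by simp
  also have "\<dots> = ev G g h (hmul (hpow c (0, 0, a1 * b2 - b1 * a2)) (hmul (hpow a s1) (hpow b s2)))"
    using g h by (simp add: ev_pow ev_mul' del: hpow.simps hmul.simps)
  also have "hmul (hpow c (0, 0, a1 * b2 - b1 * a2)) (hmul (hpow a s1) (hpow b s2)) = hsub t s1 s2"
    using t s1 s2 by (simp add: algebra_simps)
  finally show ?thesis .
qed
end



fun lt :: "bool \<times> bool \<Rightarrow> trip" where
  "lt (gen, i) = (if gen then (0, if i then -1 else 1, 0) else (if i then -1 else 1, 0, 0))"

fun nf :: "word2 \<Rightarrow> trip" where
  "nf [] = (0, 0, 0)"
| "nf (l # w) = hmul (lt l) (nf w)"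

definition Simg :: "('a, 'b) monoid_scheme \<Rightarrow> trip \<Rightarrow> 'a set" where
  "Simg G t = {ev G g h t | g h. g \<in> carrier G \<and> h \<in> carrier G}"

context cl2 begin

lemma SimgI: "g \<in> carrier G \<Longrightarrow> h \<in> carrier G \<Longrightarrow> ev G g h t \<in> Simg G t"
  unfolding Simg_def by blast

lemma word_eval_Nil[simp]: "word_eval G [] a b = \<one>" by (simp add: word_eval_def)
lemma word_eval_Cons[simp]: "word_eval G (l # w) a b = letter_eval G a b l \<otimes> word_eval G w a b"
  by (simp add: word_eval_def)

lemma letter_closed[simp]: "a \<in> carrier G \<Longrightarrow> b \<in> carrier G \<Longrightarrow> letter_eval G a b l \<in> carrier G"
  by (simp add: letter_eval_def Let_def)

lemma word_closed[simp]: "a \<in> carrier G \<Longrightarrow> b \<in> carrier G \<Longrightarrow> word_eval G w a b \<in> carrier G"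
  by (induction w) auto

lemma letter_ev: "a \<in> carrier G \<Longrightarrow> b \<in> carrier G \<Longrightarrow> letter_eval G a b l = ev G a b (lt l)"
  by (cases l) (auto simp: letter_eval_def ev_simp int_pow_neg)

lemma word_nf: "a \<in> carrier G \<Longrightarrow> b \<in> carrier G \<Longrightarrow> word_eval G w a b = ev G a b (nf w)"
  by (induction w) (auto simp: letter_ev ev_mul' ev_zero)

lemma word_image_nf: "word_image G w = Simg G (nf w)"
proof (intro equalityI subsetI)
  fix x assume "x \<in> word_image G w"
  then obtain a b where ab: "a \<in> carrier G" "b \<in> carrier G" "x = word_eval G w a b" unfolding word_image_def by blast
  thus "x \<in> Simg G (nf w)" using word_nf[OF ab(1,2)] SimgI[OF ab(1,2)] by simp
next
  fix x assume "x \<in> Simg G (nf w)"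
  then obtain a b where ab: "a \<in> carrier G" "b \<in> carrier G" "x = ev G a b (nf w)" unfolding Simg_def by blast
  hence "x = word_eval G w a b" using word_nf[OF ab(1,2)] by simp
  thus "x \<in> word_image G w" using ab(1,2) unfolding word_image_def by blast
qed

lemma word_append: "a \<in> carrier G \<Longrightarrow> b \<in> carrier G \<Longrightarrow>
   word_eval G (u @ v) a b = word_eval G u a b \<otimes> word_eval G v a b"
  by (induction u) (auto simp: m_assoc)

lemma word_pow: "a \<in> carrier G \<Longrightarrow> b \<in> carrier G \<Longrightarrow> word_eval G (wpow w n) a b = word_eval G w a b [^] n"
proof (induction n)
  case 0 then show ?case by (simp add: wpow_def)
next
  case (Suc n)
  hence "word_eval G (wpow w (Suc n)) a b = word_eval G w a b \<otimes> word_eval G w a b [^] n"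
    by (simp add: wpow_def word_append)
  also have "\<dots> = word_eval G w a b [^] Suc n"
    using Suc.prems by (simp add: nat_pow_Suc2[symmetric] del: nat_pow_Suc)
  finally show ?case .
qed

lemma letter_flip: "a \<in> carrier G \<Longrightarrow> b \<in> carrier G \<Longrightarrow> letter_eval G a b (g, \<not> i) = inv (letter_eval G a b (g, i))"
  by (auto simp: letter_eval_def Let_def)

lemma word_inv: "a \<in> carrier G \<Longrightarrow> b \<in> carrier G \<Longrightarrow> word_eval G (winv w) a b = inv (word_eval G w a b)"
proof (induction w)
  case Nil
  then show ?case by (simp add: winv_def)
next
  case (Cons l w)
  obtain g i where l: "l = (g, i)" by (cases l)
  have "winv (l # w) = winv w @ [(g, \<not> i)]" by (simp add: winv_def l)
  then show ?case using Cons l by (simp add: word_append letter_flip inv_mult_group)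
qed

lemma target_eval: assumes g: "g \<in> carrier G" and h: "h \<in> carrier G"
  shows "word_eval G (wpow wx m @ wcomm wx (wpow wy n)) g h = ev G g h (int m, 0, int n)"
proof -
  have x: "word_eval G wx g h = g" using g by (simp add: wx_def letter_eval_def)
  have y: "word_eval G wy g h = h" using h by (simp add: wy_def letter_eval_def)
  have "word_eval G (wpow wx m @ wcomm wx (wpow wy n)) g h = g [^] m \<otimes> cm G g (h [^] n)"
    using g h by (simp add: word_append word_pow word_inv x y wcomm_def cm_def m_assoc)
  also have "cm G g (h [^] n) = cm G g h [^] (int n)"
    using cm_pow_right[OF g h, of "int n"] by (simp add: int_pow_int)
  also have "g [^] m \<otimes> cm G g h [^] (int n) = cm G g h [^] (int n) \<otimes> g [^] m"
    using Z_comm[OF Z_pow[OF cm_Z[OF g h]], of "g [^] m" "int n"] g by simp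
  also have "\<dots> = ev G g h (int m, 0, int n)" using g h by (simp add: ev_simp int_pow_int)
  finally show ?thesis .
qed

lemma target_image: "word_image G (wpow wx m @ wcomm wx (wpow wy n)) = Simg G (int m, 0, int n)"
proof (intro equalityI subsetI)
  fix x assume "x \<in> word_image G (wpow wx m @ wcomm wx (wpow wy n))"
  then obtain a b where ab: "a \<in> carrier G" "b \<in> carrier G" "x = word_eval G (wpow wx m @ wcomm wx (wpow wy n)) a b" unfolding word_image_def by blast
  thus "x \<in> Simg G (int m, 0, int n)" using target_eval[OF ab(1,2)] SimgI[OF ab(1,2)] by simp
next
  fix x assume "x \<in> Simg G (int m, 0, int n)"
  then obtain a b where ab: "a \<in> carrier G" "b \<in> carrier G" "x = ev G a b (int m, 0, int n)" unfolding Simg_def by blast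
  hence "x = word_eval G (wpow wx m @ wcomm wx (wpow wy n)) a b" using target_eval[OF ab(1,2)] by simp
  thus "x \<in> word_image G (wpow wx m @ wcomm wx (wpow wy n))" using ab(1,2) unfolding word_image_def by blast
qed

lemma Simg_sub:
  assumes "\<And>u w. u \<in> carrier G \<Longrightarrow> w \<in> carrier G \<Longrightarrow>
             \<exists>g \<in> carrier G. \<exists>h \<in> carrier G. ev G g h s1 = u \<and> ev G g h s2 = w"
  shows "Simg G t = Simg G (hsub t s1 s2)"
proof
  show "Simg G (hsub t s1 s2) \<subseteq> Simg G t"
  proof
    fix x assume "x \<in> Simg G (hsub t s1 s2)"
    then obtain g h where gh: "g \<in> carrier G" "h \<in> carrier G" "x = ev G g h (hsub t s1 s2)" unfolding Simg_def by blast
    have "x = ev G (ev G g h s1) (ev G g h s2) t" by (simp only: gh(3) ev_sub[OF gh(1,2)])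
    thus "x \<in> Simg G t" using gh(1,2) by (simp add: SimgI)
  qed
  show "Simg G t \<subseteq> Simg G (hsub t s1 s2)"
  proof
    fix x assume "x \<in> Simg G t"
    then obtain u w where uw: "u \<in> carrier G" "w \<in> carrier G" "x = ev G u w t" unfolding Simg_def by blast
    obtain g h where gh: "g \<in> carrier G" "h \<in> carrier G" "ev G g h s1 = u" "ev G g h s2 = w"
      using assms[OF uw(1,2)] by blast
    have "x = ev G (ev G g h s1) (ev G g h s2) t" using uw gh by simp
    also have "\<dots> = ev G g h (hsub t s1 s2)" by (rule ev_sub[OF gh(1,2)])
    finally have "x = ev G g h (hsub t s1 s2)" .
    thus "x \<in> Simg G (hsub t s1 s2)" using gh(1,2) by (simp add: SimgI)
  qed
qed

lemma Simg_cong: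
  assumes "\<And>g h. g \<in> carrier G \<Longrightarrow> h \<in> carrier G \<Longrightarrow> ev G g h t = ev G g h t'"
  shows "Simg G t = Simg G t'"
proof -
  have "(\<exists>g h. x = ev G g h t \<and> g \<in> carrier G \<and> h \<in> carrier G) \<longleftrightarrow> (\<exists>g h. x = ev G g h t' \<and> g \<in> carrier G \<and> h \<in> carrier G)" for x
  proof
    assume "\<exists>g h. x = ev G g h t \<and> g \<in> carrier G \<and> h \<in> carrier G"
    then obtain g h where "x = ev G g h t" "g \<in> carrier G" "h \<in> carrier G" by blast
    moreover have "ev G g h t = ev G g h t'" using assms calculation(2,3) by blast
    ultimately show "\<exists>g h. x = ev G g h t' \<and> g \<in> carrier G \<and> h \<in> carrier G" by auto
  next
    assume "\<exists>g h. x = ev G g h t' \<and> g \<in> carrier G \<and> h \<in> carrier G"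
    then obtain g h where "x = ev G g h t'" "g \<in> carrier G" "h \<in> carrier G" by blast
    moreover have "ev G g h t = ev G g h t'" using assms calculation(2,3) by blast
    ultimately show "\<exists>g h. x = ev G g h t \<and> g \<in> carrier G \<and> h \<in> carrier G"
      by (intro exI[of _ g] exI[of _ h]) simp
  qed
  thus ?thesis unfolding Simg_def by simp
qed

end



lemma NT0:
  fixes u v N :: int
  assumes cop: "coprime u v" and N: "N \<noteq> 0"
  shows "\<exists>t. coprime (u + v * t) N"
proof -
  define A where "A = {p \<in> prime_factors N. \<not> p dvd u}"
  define P where "P = \<Prod> A"
  have finA: "finite A" unfolding A_def by simp
  have "coprime (u + v * P) N"
  proof (rule ccontr)
    assume "\<not> coprime (u + v * P) N"
    then obtain c where c: "c dvd u + v * P" "c dvd N" "\<not> is_unit c" by (rule not_coprimeE)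
    have "c \<noteq> 0" using c(2) N by auto
    then obtain p where p: "Factorial_Ring.prime p" "p dvd c" using c(3) by (rule prime_divisorE)
    have pu: "p dvd u + v * P" using p(2) c(1) by (rule dvd_trans)
    have pN: "p dvd N" using p(2) c(2) by (rule dvd_trans)
    have pf: "p \<in> prime_factors N" using pN p(1) N by (simp add: in_prime_factors_iff)
    show False
    proof (cases "p dvd u")
      case True
      have "\<not> p dvd v"
      proof
        assume "p dvd v"
        hence "is_unit p" using True cop by (meson coprime_common_divisor)
        thus False using p(1) not_prime_unit by blast
      qed
      moreover have "\<not> p dvd P"
      proof
        assume "p dvd P"
        then obtain q where q: "q \<in> A" "p dvd q" using prime_dvd_prod_iff[OF finA p(1), of id] unfolding P_def by auto
        have "Factorial_Ring.prime q" using q(1) unfolding A_def by auto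
        hence "p = q" using primes_dvd_imp_eq[OF p(1) _ q(2)] by simp
        thus False using q(1) True unfolding A_def by simp
      qed
      ultimately have "\<not> p dvd v * P" using p(1) by (simp add: prime_dvd_mult_iff)
      moreover have "p dvd v * P" using pu True by (simp add: dvd_add_right_iff)
      ultimately show False by simp
    next
      case False
      have "p \<in> A" using pf False unfolding A_def by simp
      hence "p dvd P" unfolding P_def using dvd_prodI[OF finA, of p "\<lambda>x. x"] by simp
      hence "p dvd v * P" by simp
      hence "p dvd u" using pu by (simp add: dvd_add_left_iff)
      thus False using False by simp
    qed
  qed
  thus ?thesis by blast
qed

lemma NT:
  fixes c M N :: int
  assumes M: "M > 0" and N: "N > 0"
  shows "\<exists>k. coprime k N \<and> M dvd (c * k - gcd c M)"
proof -
  define g where "g = gcd c M"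
  have g0: "g > 0" using M unfolding g_def by simp
  obtain u where u: "c = g * u" unfolding g_def by (meson gcd_dvd1 dvdE)
  obtain v where v: "M = g * v" unfolding g_def by (meson gcd_dvd2 dvdE)
  have cuv: "coprime u v"
  proof -
    have "gcd c M = g * gcd u v" using u v g0 by (simp add: gcd_mult_left)
    hence "gcd u v = 1" using g0 M unfolding g_def by auto
    thus ?thesis by (simp add: coprime_iff_gcd_eq_1)
  qed
  obtain t where t: "coprime (u + v * t) (N * M)" using NT0[OF cuv, of "N * M"] M N by auto
  define u' where "u' = u + v * t"
  obtain x y where xy: "x * u' + y * (N * M) = 1"
    using bezout_int[of u' "N * M"] t unfolding u'_def by (auto simp: coprime_iff_gcd_eq_1)
  have "coprime x N"
  proof (rule coprimeI)
    fix d assume "d dvd x" "d dvd N"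
    hence "d dvd x * u' + y * (N * M)" by simp
    thus "is_unit d" using xy by simp
  qed
  moreover have "c * x - g = M * (- g * y * N - t * x)"
  proof -
    have "g * (x * (u + v * t) + y * (N * (g * v))) = g" using xy v unfolding u'_def by simp
    hence "g * x * u = g - g * x * v * t - g * g * y * N * v" by (simp add: algebra_simps)
    thus ?thesis using u v by (simp add: algebra_simps)
  qed
  moreover have "M dvd c * x - g" unfolding calculation(2) by simp
  ultimately show ?thesis unfolding g_def by blast
qed


lemma grp_exp_prop:
  fixes n :: nat
  assumes "0 < n" "\<forall>g\<in>carrier H. g [^]\<^bsub>H\<^esub> n = \<one>\<^bsub>H\<^esub>"
  shows "0 < grp_exp H \<and> (\<forall>g\<in>carrier H. g [^]\<^bsub>H\<^esub> grp_exp H = \<one>\<^bsub>H\<^esub>) \<and> grp_exp H \<le> n"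
proof -
  let ?P = "\<lambda>n::nat. 0 < n \<and> (\<forall>g\<in>carrier H. g [^]\<^bsub>H\<^esub> n = \<one>\<^bsub>H\<^esub>)"
  have P: "?P n" using assms by blast
  have "?P (Least ?P)" using P by (rule LeastI)
  moreover have "Least ?P \<le> n" by (rule Least_le[of ?P n, OF P])
  ultimately show ?thesis unfolding grp_exp_def by (intro conjI) auto
qed

locale cl2f = cl2 + assumes fin: "finite (carrier G)"
begin

lemma pow_mod:
  assumes x: "x \<in> carrier G" and N: "x [^] (N::nat) = \<one>" and d: "int N dvd (i - j)"
  shows "x [^] (i::int) = x [^] j"
proof -
  obtain q where q: "i = j + int N * q" using d by (metis add_diff_cancel_left' diff_add_cancel dvdE)
  have "x [^] i = x [^] j \<otimes> (x [^] (int N)) [^] q" using x by (simp add: q int_pow_mult int_pow_pow)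
  also have "x [^] (int N) = \<one>" using N by (simp add: int_pow_int)
  finally show ?thesis using x by simp
qed

definition "e = grp_exp G"
definition "f = grp_exp (G Mod Z)"
definition "e' = grp_exp (G\<lparr>carrier := derived G (carrier G)\<rparr>)"

lemma e_prop: "0 < e" "\<And>g. g \<in> carrier G \<Longrightarrow> g [^] e = \<one>"
proof -
  have "0 < order G" using fin by (simp add: order_gt_0_iff_finite)
  moreover have "\<forall>g\<in>carrier G. g [^] order G = \<one>" using pow_order_eq_1 by blast
  ultimately have "0 < e \<and> (\<forall>g\<in>carrier G. g [^] e = \<one>)" using grp_exp_prop unfolding e_def by blast
  thus "0 < e" "\<And>g. g \<in> carrier G \<Longrightarrow> g [^] e = \<one>" by auto
qed

lemma Z_sub: "Z \<subseteq> carrier G" using Z_carr by blast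

lemma one_Z: "\<one> \<in> Z" unfolding grp_center_def by simp

lemma Z_subgroup: "subgroup Z G"
proof (rule subgroupI)
  show "Z \<subseteq> carrier G" by (rule Z_sub)
  show "Z \<noteq> {}" using one_Z by blast
  fix a assume a: "a \<in> Z"
  have "a [^] (- 1 :: int) \<in> Z" by (rule Z_pow[OF a])
  thus "inv a \<in> Z" using Z_carr[OF a] by (simp add: int_pow_neg)
next
  fix a b assume "a \<in> Z" "b \<in> Z" thus "a \<otimes> b \<in> Z" by (rule Z_mult)
qed

lemma Z_normal: "Z \<lhd> G"
proof -
  have "x \<otimes> h \<otimes> inv x \<in> Z" if "x \<in> carrier G" "h \<in> Z" for x h
  proof -
    have "x \<otimes> h = h \<otimes> x" using Z_comm[OF that(2,1)] by simp
    hence "x \<otimes> h \<otimes> inv x = h" using that Z_carr by (simp add: m_assoc)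
    thus ?thesis using that by simp
  qed
  thus ?thesis using Z_subgroup by (simp add: normal_inv_iff)
qed

lemma cm_Z_one: "g \<in> carrier G \<Longrightarrow> z \<in> Z \<Longrightarrow> cm G g z = \<one>"
proof -
  assume g: "g \<in> carrier G" and z: "z \<in> Z"
  have "cm G g z = z \<otimes> g \<otimes> inv g \<otimes> inv z" unfolding cm_def using Z_comm[OF z g] by simp
  also have "\<dots> = \<one>" using g Z_carr[OF z] by (simp add: m_assoc)
  finally show ?thesis .
qed

lemma cm_one_Z: assumes z: "z \<in> carrier G" and c: "\<And>g. g \<in> carrier G \<Longrightarrow> cm G g z = \<one>" shows "z \<in> Z"
proof -
  have "z \<otimes> g = g \<otimes> z" if g: "g \<in> carrier G" for g
    using cm_mult[OF g z] c[OF g] g z by simp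
  thus ?thesis using z unfolding grp_center_def by blast
qed

lemma quot_pow: "h \<in> carrier G \<Longrightarrow> (Z #> h) [^]\<^bsub>(G Mod Z)\<^esub> (n::nat) = Z #> (h [^] n)"
  using normal.FactGroup_pow[OF Z_normal] by simp

lemma exp_quot: assumes n: "0 < n" and hn: "\<And>h. h \<in> carrier G \<Longrightarrow> h [^] (n::nat) \<in> Z"
  shows "\<forall>Q\<in>carrier (G Mod Z). Q [^]\<^bsub>(G Mod Z)\<^esub> n = \<one>\<^bsub>(G Mod Z)\<^esub>"
proof
  fix Q assume "Q \<in> carrier (G Mod Z)"
  then obtain h where h: "h \<in> carrier G" "Q = Z #> h" by (auto simp: carrier_FactGroup)
  have "Q [^]\<^bsub>(G Mod Z)\<^esub> n = Z #> (h [^] n)" using h quot_pow by simp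
  also have "\<dots> = Z" using subgroup.rcos_const[OF Z_subgroup is_group hn[OF h(1)]] .
  finally show "Q [^]\<^bsub>(G Mod Z)\<^esub> n = \<one>\<^bsub>(G Mod Z)\<^esub>" by simp
qed

lemma f_prop: "0 < f" "\<And>h. h \<in> carrier G \<Longrightarrow> h [^] f \<in> Z"
proof -
  have "\<forall>Q\<in>carrier (G Mod Z). Q [^]\<^bsub>(G Mod Z)\<^esub> e = \<one>\<^bsub>(G Mod Z)\<^esub>"
    using exp_quot[OF e_prop(1)] e_prop(2) one_Z by simp
  hence fp: "0 < f \<and> (\<forall>Q\<in>carrier (G Mod Z). Q [^]\<^bsub>(G Mod Z)\<^esub> f = \<one>\<^bsub>(G Mod Z)\<^esub>)"
    using grp_exp_prop[OF e_prop(1)] unfolding f_def by blast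
  thus "0 < f" by simp
  fix h assume h: "h \<in> carrier G"
  have "Z #> h \<in> carrier (G Mod Z)" using h by (auto simp: carrier_FactGroup)
  hence "(Z #> h) [^]\<^bsub>(G Mod Z)\<^esub> f = \<one>\<^bsub>(G Mod Z)\<^esub>" using fp by blast
  hence "Z #> (h [^] f) = Z" using quot_pow[OF h] by simp
  moreover have "h [^] f \<in> Z #> (h [^] f)" using rcos_self[OF _ Z_subgroup] h by simp
  ultimately show "h [^] f \<in> Z" by simp
qed

lemma D_pow: "x [^]\<^bsub>G\<lparr>carrier := D\<rparr>\<^esub> (n::nat) = x [^] n"
  by (simp add: nat_pow_def)

lemma e'_prop: "0 < e'" "\<And>x. x \<in> derived G (carrier G) \<Longrightarrow> x [^] e' = \<one>"
proof -
  have "\<forall>x\<in>carrier (G\<lparr>carrier := derived G (carrier G)\<rparr>). x [^]\<^bsub>G\<lparr>carrier := derived G (carrier G)\<rparr>\<^esub> e = \<one>\<^bsub>G\<lparr>carrier := derived G (carrier G)\<rparr>\<^esub>"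
    using e_prop(2) cl2 Z_sub by (auto simp: D_pow)
  hence "0 < e' \<and> (\<forall>x\<in>carrier (G\<lparr>carrier := derived G (carrier G)\<rparr>). x [^]\<^bsub>G\<lparr>carrier := derived G (carrier G)\<rparr>\<^esub> e' = \<one>\<^bsub>G\<lparr>carrier := derived G (carrier G)\<rparr>\<^esub>)"
    using grp_exp_prop[OF e_prop(1)] unfolding e'_def by blast
  thus "0 < e'" "\<And>x. x \<in> derived G (carrier G) \<Longrightarrow> x [^] e' = \<one>" by (auto simp: D_pow)
qed

lemma cm_in_D: "g \<in> carrier G \<Longrightarrow> h \<in> carrier G \<Longrightarrow> cm G g h \<in> derived G (carrier G)"
proof -
  assume "g \<in> carrier G" "h \<in> carrier G"
  hence "cm G g h \<in> derived_set G (carrier G)" unfolding cm_def by blast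
  thus ?thesis unfolding derived_def by (rule generate.incl)
qed

lemma cm_pow_nat: "g \<in> carrier G \<Longrightarrow> h \<in> carrier G \<Longrightarrow> cm G g (h [^] (n::nat)) = cm G g h [^] n"
  using cm_pow_right[of g h "int n"] by (simp add: int_pow_int)

lemma f_le: "f \<le> e'"
proof -
  have "h [^] e' \<in> Z" if h: "h \<in> carrier G" for h
  proof (rule cm_one_Z)
    show "h [^] e' \<in> carrier G" using h by simp
    fix g assume g: "g \<in> carrier G"
    show "cm G g (h [^] e') = \<one>" using cm_pow_nat[OF g h] e'_prop(2)[OF cm_in_D[OF g h]] by simp
  qed
  hence "\<forall>Q\<in>carrier (G Mod Z). Q [^]\<^bsub>(G Mod Z)\<^esub> e' = \<one>\<^bsub>(G Mod Z)\<^esub>"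
    using exp_quot[OF e'_prop(1)] by simp
  thus ?thesis using grp_exp_prop[OF e'_prop(1)] unfolding f_def by blast
qed

lemma C_f: "g \<in> carrier G \<Longrightarrow> h \<in> carrier G \<Longrightarrow> cm G g h [^] f = \<one>"
  using cm_pow_nat[of g h f] cm_Z_one f_prop(2) by simp

end

lemma hsub_third: "snd (snd (hsub (al, be, ga) (a1, b1, c1) (a2, b2, c2)))
   = snd (snd (hsub (al, be, 0) (a1, b1, c1) (a2, b2, c2))) + ga * (a1 * b2 - b1 * a2)"
  by simp

context cl2f begin

lemma surj_ev: assumes r: "hsub s1 r1 r2 = (1, 0, 0)" "hsub s2 r1 r2 = (0, 1, 0)"
  shows "\<And>u w. u \<in> carrier G \<Longrightarrow> w \<in> carrier G \<Longrightarrow>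
             \<exists>g \<in> carrier G. \<exists>h \<in> carrier G. ev G g h s1 = u \<and> ev G g h s2 = w"
proof -
  fix u w assume u: "u \<in> carrier G" and w: "w \<in> carrier G"
  have "ev G (ev G u w r1) (ev G u w r2) s1 = u" using ev_sub[OF u w] r ev_x[OF u w] by simp
  moreover have "ev G (ev G u w r1) (ev G u w r2) s2 = w" using ev_sub[OF u w] r ev_y[OF u w] by simp
  ultimately show "\<exists>g \<in> carrier G. \<exists>h \<in> carrier G. ev G g h s1 = u \<and> ev G g h s2 = w"
    using u w by (meson ev_closed)
qed

lemma stepA: "\<exists>c'. Simg G (a, b, c) = Simg G (gcd a b, 0, c')"
proof -
  define d where "d = gcd a b"
  obtain a' b' p q where abpq: "a = d * a'" "b = d * b'" "a' * p + b' * q = 1"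
  proof (cases "d = 0")
    case True
    hence "a = 0" "b = 0" unfolding d_def by auto
    thus ?thesis using that[of 1 0 1 0] True by simp
  next
    case False
    obtain a' where a': "a = d * a'" unfolding d_def by (meson gcd_dvd1 dvdE)
    obtain b' where b': "b = d * b'" unfolding d_def by (meson gcd_dvd2 dvdE)
    obtain p q where pq: "p * a + q * b = d" using bezout_int[of a b] unfolding d_def by blast
    have "d * (a' * p + b' * q) = d * 1" using pq a' b' by (simp add: algebra_simps)
    hence "a' * p + b' * q = 1" using False by simp
    thus ?thesis using that a' b' by blast
  qed
  define r1 where "r1 = (a', b', 0::int)"
  define r2 where "r2 = (- q, p, 0::int)"
  define x1 where "x1 = - snd (snd (hsub (p, - b', 0) r1 r2))"
  define x2 where "x2 = - snd (snd (hsub (q, a', 0) r1 r2))"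
  define s1 where "s1 = (p, - b', x1)"
  define s2 where "s2 = (q, a', x2)"
  have del: "a' * p - b' * - q = 1" using abpq(3) by simp
  have h1: "hsub s1 r1 r2 = (1, 0, 0)"
  proof -
    have "snd (snd (hsub s1 r1 r2)) = 0"
      unfolding s1_def r1_def r2_def using hsub_third[of p "- b'" x1 a' b' 0 "- q" p 0] del
      by (simp only: x1_def r1_def r2_def)
    moreover have "fst (hsub s1 r1 r2) = 1" "fst (snd (hsub s1 r1 r2)) = 0"
      unfolding s1_def r1_def r2_def using abpq(3) by (simp_all add: algebra_simps)
    ultimately show ?thesis by (metis prod.collapse)
  qed
  have h2: "hsub s2 r1 r2 = (0, 1, 0)"
  proof -
    have "snd (snd (hsub s2 r1 r2)) = 0"
      unfolding s2_def r1_def r2_def using hsub_third[of q a' x2 a' b' 0 "- q" p 0] del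
      by (simp only: x2_def r1_def r2_def)
    moreover have "fst (hsub s2 r1 r2) = 0" "fst (snd (hsub s2 r1 r2)) = 1"
      unfolding s2_def r1_def r2_def using abpq(3) by (simp_all add: algebra_simps)
    ultimately show ?thesis by (metis prod.collapse)
  qed
  have "Simg G (a, b, c) = Simg G (hsub (a, b, c) s1 s2)"
    by (rule Simg_sub[OF surj_ev[OF h1 h2]])
  moreover have "fst (hsub (a, b, c) s1 s2) = d"
  proof -
    have "fst (hsub (a, b, c) s1 s2) = d * (a' * p + b' * q)"
      unfolding s1_def s2_def using abpq(1,2) by (simp add: algebra_simps)
    thus ?thesis using abpq(3) by simp
  qed
  moreover have "fst (snd (hsub (a, b, c) s1 s2)) = 0"
    unfolding s1_def s2_def using abpq by (simp add: algebra_simps)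
  ultimately have "Simg G (a, b, c) = Simg G (d, 0, snd (snd (hsub (a, b, c) s1 s2)))"
    by (metis prod.collapse)
  thus ?thesis unfolding d_def by blast
qed

lemma inv_mod: assumes "coprime k (int N)" obtains k' where "int N dvd (k' * k - 1)"
proof -
  obtain x y where "x * k + y * int N = gcd k (int N)" using bezout_int by blast
  hence "x * k + y * int N = 1" using assms by (simp add: coprime_iff_gcd_eq_1)
  hence "k' * k - 1 = int N * (- y)" if "k' = x" for k' using that by (simp add: algebra_simps)
  thus ?thesis using that by (metis dvd_triv_left)
qed

lemma stepB: "\<exists>c'. Simg G (d, 0, c) = Simg G (gcd d (int e), 0, c')"
proof -
  have e0: "int e > 0" using e_prop(1) by simp
  obtain k where k: "coprime k (int e)" "int e dvd (d * k - gcd d (int e))" using NT[OF e0 e0] by blast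
  obtain k' where k': "int e dvd (k' * k - 1)" using inv_mod[OF k(1)] by blast
  have surj: "\<exists>g \<in> carrier G. \<exists>h \<in> carrier G. ev G g h (k, 0, 0) = u \<and> ev G g h (0, 1, 0) = w"
    if u: "u \<in> carrier G" and w: "w \<in> carrier G" for u w
  proof -
    have "ev G (u [^] k') w (k, 0, 0) = u [^] (k' * k)" using u w by (simp add: ev_simp int_pow_pow)
    also have "\<dots> = u [^] (1::int)" using pow_mod[OF u e_prop(2)[OF u] k'] .
    finally have 1: "ev G (u [^] k') w (k, 0, 0) = u" using u by simp
    have 2: "ev G (u [^] k') w (0, 1, 0) = w" using u w by (simp add: ev_y)
    show ?thesis using 1 2 u w by (meson int_pow_closed)
  qed
  have "Simg G (d, 0, c) = Simg G (hsub (d, 0, c) (k, 0, 0) (0, 1, 0))"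
    by (rule Simg_sub[OF surj])
  also have "hsub (d, 0, c) (k, 0, 0) (0, 1, 0) = (d * k, 0, c * k)" by simp
  also have "Simg G (d * k, 0, c * k) = Simg G (gcd d (int e), 0, c * k)"
  proof (rule Simg_cong)
    fix g h assume g: "g \<in> carrier G" and h: "h \<in> carrier G"
    have "g [^] (d * k) = g [^] gcd d (int e)" using pow_mod[OF g e_prop(2)[OF g] k(2)] .
    thus "ev G g h (d * k, 0, c * k) = ev G g h (gcd d (int e), 0, c * k)" by (simp add: ev_simp)
  qed
  finally show ?thesis by blast
qed

lemma stepC: "Simg G (m, 0, c) = Simg G (m, 0, gcd c (int f))"
proof -
  have e0: "int e > 0" using e_prop(1) by simp
  have f0: "int f > 0" using f_prop(1) by simp
  obtain k where k: "coprime k (int e)" "int f dvd (c * k - gcd c (int f))" using NT[OF f0 e0] by blast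
  obtain k' where k': "int e dvd (k' * k - 1)" using inv_mod[OF k(1)] by blast
  have surj: "\<exists>g \<in> carrier G. \<exists>h \<in> carrier G. ev G g h (1, 0, 0) = u \<and> ev G g h (0, k, 0) = w"
    if u: "u \<in> carrier G" and w: "w \<in> carrier G" for u w
  proof -
    have "ev G u (w [^] k') (0, k, 0) = w [^] (k' * k)" using u w by (simp add: ev_simp int_pow_pow)
    also have "\<dots> = w [^] (1::int)" using pow_mod[OF w e_prop(2)[OF w] k'] .
    finally have 2: "ev G u (w [^] k') (0, k, 0) = w" using w by simp
    have 1: "ev G u (w [^] k') (1, 0, 0) = u" using u w by (simp add: ev_x)
    show ?thesis using 1 2 u w by (meson int_pow_closed)
  qed
  have "Simg G (m, 0, c) = Simg G (hsub (m, 0, c) (1, 0, 0) (0, k, 0))"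
    by (rule Simg_sub[OF surj])
  also have "hsub (m, 0, c) (1, 0, 0) (0, k, 0) = (m, 0, c * k)" by simp
  also have "Simg G (m, 0, c * k) = Simg G (m, 0, gcd c (int f))"
  proof (rule Simg_cong)
    fix g h assume g: "g \<in> carrier G" and h: "h \<in> carrier G"
    have "cm G g h [^] (c * k) = cm G g h [^] gcd c (int f)"
      using pow_mod[OF cm_closed[OF g h] C_f[OF g h] k(2)] .
    thus "ev G g h (m, 0, c * k) = ev G g h (m, 0, gcd c (int f))" by (simp add: ev_simp)
  qed
  finally show ?thesis .
qed

lemma main: "\<exists>m n. m dvd e \<and> n dvd f \<and> n \<le> e' \<and>
   word_image G v = word_image G (wpow wx m @ wcomm wx (wpow wy n))"
proof -
  obtain a b c where abc: "nf v = (a, b, c)" by (cases "nf v")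
  obtain c1 where 1: "Simg G (a, b, c) = Simg G (gcd a b, 0, c1)" using stepA by blast
  obtain c2 where 2: "Simg G (gcd a b, 0, c1) = Simg G (gcd (gcd a b) (int e), 0, c2)" using stepB by blast
  define m0 where "m0 = gcd (gcd a b) (int e)"
  define n0 where "n0 = gcd c2 (int f)"
  have 3: "Simg G (m0, 0, c2) = Simg G (m0, 0, n0)" unfolding n0_def by (rule stepC)
  have m0: "m0 \<ge> 0" "m0 dvd int e" unfolding m0_def by simp_all
  have n0: "n0 \<ge> 0" "n0 dvd int f" unfolding n0_def by simp_all
  have "n0 \<le> int f" using n0(2) f_prop(1) by (simp add: zdvd_imp_le)
  hence "nat n0 \<le> e'" using f_le by linarith
  moreover have "nat m0 dvd e" using m0 by (metis int_nat_eq of_nat_dvd_iff)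
  moreover have "nat n0 dvd f" using n0 by (metis int_nat_eq of_nat_dvd_iff)
  moreover have "word_image G v = word_image G (wpow wx (nat m0) @ wcomm wx (wpow wy (nat n0)))"
  proof -
    have t: "word_image G (wpow wx (nat m0) @ wcomm wx (wpow wy (nat n0))) = Simg G (int (nat m0), 0, int (nat n0))"
      by (rule target_image)
    have "word_image G v = Simg G (m0, 0, n0)" using word_image_nf[of v] abc 1 2 3 unfolding m0_def by simp
    thus ?thesis using t m0(1) n0(1) by simp
  qed
  ultimately show ?thesis by blast
qed

end

theorem theorem3p7:
  fixes G :: "('a, 'b) monoid_scheme"
  assumes "group G"
    and "finite (carrier G)"
    and "derived G (carrier G) \<subseteq> grp_center G"
  shows "exhaustive2 G
           {wpow wx m @ wcomm wx (wpow wy n) | m n.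
              m dvd grp_exp G
            \<and> n dvd grp_exp (G Mod (grp_center G))
            \<and> n \<le> grp_exp (G\<lparr>carrier := derived G (carrier G)\<rparr>)}"
proof -
  interpret cl2f G
    using assms by (simp add: cl2f_def cl2_def cl2_axioms_def cl2f_axioms_def)
  show ?thesis unfolding exhaustive2_def
  proof
    fix v
    obtain m n where mn: "m dvd e" "n dvd f" "n \<le> e'"
      "word_image G v = word_image G (wpow wx m @ wcomm wx (wpow wy n))" using main by blast
    thus "\<exists>w\<in>{wpow wx m @ wcomm wx (wpow wy n) | m n.
              m dvd grp_exp G
            \<and> n dvd grp_exp (G Mod (grp_center G))
            \<and> n \<le> grp_exp (G\<lparr>carrier := derived G (carrier G)\<rparr>)}. word_image G v = word_image G w"
      unfolding e_def f_def e'_def by blast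
  qed
qed

end
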